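(* Let $K$ be the Cayley complex of the presentation $\langle a,b,c \mid aba^{-1}b^{-1}c\rangle$ of the group $G=\mathbb{F}_3/N$ (vertices are the elements of $G$, there is an edge from $g$ to $gx$ labelled $x$ for each $g\in G$ and $x\in\{a,b,c\}$, and for each $g\in G$ a pentagonal 2-cell is attached along the edge-loop starting at $g$ reading $aba^{-1}b^{-1}c$). Let $\gamma$ be an embedded closed edge-cycle in $K$ and let $U = \Delta_1 \cup \dots \cup \Delta_F \subset K$ be a subcomplex, consisting of faces $\Delta_i$ of $K$, which is topologically a disc with boundary $\partial U=\gamma$. Then either $U$ consists of exactly one face, or there exist at least two distinct faces $\Delta_i, \Delta_j$ of $U$ each of which intersects $\partial U$ along $4$ edges.
   Context: $K$ is a simply connected 2-dimensional PL manifold with boundary, and every vertex of $K$ lies on the boundary of $K$. *)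

theory Defs
  imports "HOL-Analysis.Analysis"
begin

datatype gen = GA | GB | GC

type_synonym letter = "gen \<times> bool"   \<comment> \<open>(x, True) = x, (x, False) = x^-1\<close>
type_synonym word = "letter list"

definition inv_letter :: "letter \<Rightarrow> letter" where
  "inv_letter l = (fst l, \<not> snd l)"

definition relator :: word where
  "relator = [(GA, True), (GB, True), (GA, False), (GB, False), (GC, True)]"

inductive pres_step :: "word \<Rightarrow> word \<Rightarrow> bool" where
  cancel: "pres_step (p @ [l, inv_letter l] @ q) (p @ q)"
| rel: "pres_step (p @ relator @ q) (p @ q)"
| relinv: "pres_step (p @ rev (map inv_letter relator) @ q) (p @ q)"

definition pres_eq :: "word \<Rightarrow> word \<Rightarrow> bool" where
  "pres_eq = equivclp pres_step"

type_synonym grp = "word set"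

definition vert :: "word \<Rightarrow> grp" where
  "vert w = {v. pres_eq w v}"

definition Gset :: "grp set" where
  "Gset = range vert"

definition gmul :: "grp \<Rightarrow> word \<Rightarrow> grp" where
  "gmul g u = vert ((SOME w. w \<in> g) @ u)"

type_synonym edge = "grp \<times> gen"

definition edge_src :: "edge \<Rightarrow> grp" where "edge_src e = fst e"
definition edge_tgt :: "edge \<Rightarrow> grp" where "edge_tgt e = gmul (fst e) [(snd e, True)]"

definition fcorner :: "grp \<Rightarrow> nat \<Rightarrow> grp" where
  "fcorner g i = gmul g (take i relator)"

definition face_edge :: "grp \<Rightarrow> nat \<Rightarrow> edge" where
  "face_edge g i = (if snd (relator ! i) then (fcorner g i, fst (relator ! i))
                    else (fcorner g (Suc i), fst (relator ! i)))"

definition face_edges :: "grp \<Rightarrow> edge set" where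
  "face_edges g = face_edge g ` {..<5}"

definition pc :: "nat \<Rightarrow> complex" where
  "pc i = cis (2 * pi * real i / 5)"

definition Pent :: "complex set" where
  "Pent = convex hull (pc ` {..<5})"

datatype 'v pt = Vtx 'v | EdgePt "'v \<times> gen" real | FacePt 'v complex

definition canon :: "grp \<Rightarrow> complex \<Rightarrow> grp pt" where
  "canon g p =
    (if \<exists>i<5. p = pc i then Vtx (fcorner g (SOME i. i < 5 \<and> p = pc i))
     else if \<exists>i<5. \<exists>t. 0 < t \<and> t < 1 \<and> p = of_real (1 - t) * pc i + of_real t * pc (Suc i)
     then (let (i, t) = (SOME (i, t). i < 5 \<and> 0 < t \<and> t < 1 \<and>
                           p = of_real (1 - t) * pc i + of_real t * pc (Suc i))
           in EdgePt (face_edge g i) (if snd (relator ! i) then t else 1 - t))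
     else FacePt g p)"

definition quotient_topology :: "'a topology \<Rightarrow> ('a \<Rightarrow> 'b) \<Rightarrow> 'b topology" where
  "quotient_topology X f =
     topology (\<lambda>V. V \<subseteq> f ` topspace X \<and> openin X {x \<in> topspace X. f x \<in> V})"

definition K_top :: "grp pt topology" where
  "K_top = quotient_topology (prod_topology (discrete_topology Gset) (top_of_set Pent))
                             (\<lambda>(g, p). canon g p)"

definition real_faces :: "grp set \<Rightarrow> grp pt set" where
  "real_faces U = (\<lambda>(g, p). canon g p) ` (U \<times> Pent)"

definition real_edge :: "edge \<Rightarrow> grp pt set" where
  "real_edge e = {Vtx (edge_src e), Vtx (edge_tgt e)} \<union> {EdgePt e s | s. 0 < s \<and> s < 1}"

definition embedded_edge_cycle :: "grp list \<Rightarrow> edge list \<Rightarrow> bool" where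
  "embedded_edge_cycle vs es \<longleftrightarrow>
     length vs = length es \<and> length vs \<ge> 1 \<and> set vs \<subseteq> Gset \<and> distinct vs \<and> distinct es \<and>
     (\<forall>i < length es. {edge_src (es ! i), edge_tgt (es ! i)} =
                       {vs ! i, vs ! (Suc i mod length vs)})"

end

theory Submission
  imports Defs "HOL-Homology.Invariance_of_Domain"
begin

abbreviation "la \<equiv> (GA, True)"
abbreviation "lA \<equiv> (GA, False)"
abbreviation "lb \<equiv> (GB, True)"
abbreviation "lB \<equiv> (GB, False)"

lemma inv_inv[simp]: "inv_letter (inv_letter x) = x"
  by (simp add: inv_letter_def)

lemma inv_letter_simps[simp]: "inv_letter (x, b) = (x, \<not> b)"
  by (simp add: inv_letter_def)

definition invw :: "word \<Rightarrow> word" where "invw w = rev (map inv_letter w)"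

lemma invw_simps[simp]: "invw [] = []" "invw (x # w) = invw w @ [inv_letter x]"
  "invw (u @ v) = invw v @ invw u" "invw (invw w) = w"
  by (auto simp: invw_def rev_map[symmetric] o_def)

definition rstep :: "letter \<Rightarrow> word \<Rightarrow> word" where
  "rstep x r = (case r of [] \<Rightarrow> [x] | y # r' \<Rightarrow> if y = inv_letter x then r' else x # r)"

fun red :: "word \<Rightarrow> word" where
  "red [] = []"
| "red (x # w) = rstep x (red w)"

fun reduced :: "word \<Rightarrow> bool" where
  "reduced [] = True"
| "reduced [x] = True"
| "reduced (x # y # r) = (y \<noteq> inv_letter x \<and> reduced (y # r))"

lemma reduced_tl: "reduced (x # r) \<Longrightarrow> reduced r"
  by (cases r) auto

lemma reduced_rstep[simp]: "reduced r \<Longrightarrow> reduced (rstep x r)"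
  by (cases r) (auto simp: rstep_def dest: reduced_tl)

lemma reduced_red[simp]: "reduced (red w)"
  by (induction w) auto

lemma rstep_cancel[simp]: "y = inv_letter x \<Longrightarrow> reduced r \<Longrightarrow> rstep x (rstep y r) = r"
proof (cases r)
  case Nil
  assume "y = inv_letter x" then show ?thesis using Nil by (simp add: rstep_def)
next
  case (Cons z r')
  assume y: "y = inv_letter x" and rr: "reduced r"
  show ?thesis
  proof (cases "z = x")
    case True
    then show ?thesis using Cons y rr by (cases r') (auto simp: rstep_def)
  next
    case False
    then show ?thesis using Cons y by (auto simp: rstep_def)
  qed
qed

lemma red_reduced: "reduced r \<Longrightarrow> red r = r"
proof (induction r)
  case Nil then show ?case by simp
next
  case (Cons x r)
  then show ?case by (cases r) (auto simp: rstep_def dest: reduced_tl)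
qed

lemma red_red[simp]: "red (red w) = red w"
  by (simp add: red_reduced)

lemma red_append: "red (p @ q) = red (p @ red q)"
  by (induction p) auto

lemma red_cancel_gen: "red (xs @ invw xs @ C) = red C"
proof (induction xs arbitrary: C)
  case Nil then show ?case by simp
next
  case (Cons x xs)
  have "red ((x # xs) @ invw (x # xs) @ C) = rstep x (red (xs @ invw xs @ (inv_letter x # C)))"
    by simp
  also have "\<dots> = rstep x (rstep (inv_letter x) (red C))" using Cons by simp
  also have "\<dots> = red C" by simp
  finally show ?case .
qed

lemma red_cancel_mid: "red (A @ xs @ invw xs @ C) = red (A @ C)"
  by (metis red_append red_cancel_gen)

lemma rstep_length: "reduced r \<Longrightarrow> length (rstep x r) = Suc (length r) \<or> Suc (length (rstep x r)) = length r"
  by (cases r) (auto simp: rstep_def)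

lemma rstep_shorter: "length (rstep x r) < length r \<Longrightarrow> r \<noteq> [] \<and> hd r = inv_letter x"
  by (cases r) (auto simp: rstep_def split: if_splits)

definition phil :: "letter \<Rightarrow> word" where
  "phil l = (case l of (GC, True) \<Rightarrow> [lb, la, lB, lA] | (GC, False) \<Rightarrow> [la, lb, lA, lB] | _ \<Rightarrow> [l])"

definition phi :: "word \<Rightarrow> word" where "phi w = concat (map phil w)"

lemma phi_simps[simp]: "phi [] = []" "phi (x # w) = phil x @ phi w" "phi (u @ v) = phi u @ phi v"
  by (auto simp: phi_def)

lemma phil_inv: "phil (inv_letter l) = invw (phil l)"
  by (cases l; rename_tac x b; case_tac x; case_tac b; simp add: phil_def)

definition theta :: "word \<Rightarrow> word" where "theta w = red (invw (phi w))"

lemma theta_step: "pres_step u v \<Longrightarrow> theta u = theta v"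
proof (induction rule: pres_step.induct)
  case (cancel p l q)
  have "invw (phi (p @ [l, inv_letter l] @ q)) = invw (phi q) @ phil l @ invw (phil l) @ invw (phi p)"
    by (simp add: phil_inv)
  then show ?case unfolding theta_def by (simp only: red_cancel_mid) simp
next
  case (rel p q)
  have "invw (phi (p @ relator @ q)) = invw (phi q) @ [la, lb, lA, lB] @ invw [la, lb, lA, lB] @ invw (phi p)"
    by (simp add: relator_def phil_def)
  then show ?case unfolding theta_def by (simp only: red_cancel_mid) simp
next
  case (relinv p q)
  have "invw (phi (p @ rev (map inv_letter relator) @ q)) = invw (phi q) @ [la, lb, lA, lB] @ invw [la, lb, lA, lB] @ invw (phi p)"
    by (simp add: relator_def phil_def)
  then show ?case unfolding theta_def by (simp only: red_cancel_mid) simp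
qed

lemma theta_eq: "pres_eq u v \<Longrightarrow> theta u = theta v"
  unfolding pres_eq_def
  by (induction rule: equivclp_induct) (auto dest: theta_step)

lemma pres_eq_refl[simp]: "pres_eq u u" by (simp add: pres_eq_def)
lemma pres_eq_sym: "pres_eq u v \<Longrightarrow> pres_eq v u" by (simp add: pres_eq_def equivclp_sym)
lemma pres_eq_trans[trans]: "pres_eq u v \<Longrightarrow> pres_eq v w \<Longrightarrow> pres_eq u w"
  unfolding pres_eq_def by (rule equivclp_trans)

lemma pres_step_app_right: "pres_step u v \<Longrightarrow> pres_step (u @ t) (v @ t)"
  by (induction rule: pres_step.induct) (metis append.assoc pres_step.intros)+

lemma pres_step_app_left: "pres_step u v \<Longrightarrow> pres_step (t @ u) (t @ v)"
  by (induction rule: pres_step.induct) (metis append.assoc pres_step.intros)+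

lemma pres_eq_app_right: "pres_eq u v \<Longrightarrow> pres_eq (u @ t) (v @ t)"
  unfolding pres_eq_def
proof (induction rule: equivclp_induct)
  case base then show ?case by simp
next
  case (step y z)
  then show ?case
    by (meson equivclp_into_equivclp pres_step_app_right)
qed

lemma pres_eq_app_left: "pres_eq u v \<Longrightarrow> pres_eq (t @ u) (t @ v)"
  unfolding pres_eq_def
proof (induction rule: equivclp_induct)
  case base then show ?case by simp
next
  case (step y z)
  then show ?case
    by (meson equivclp_into_equivclp pres_step_app_left)
qed

lemma pres_eq_cancel: "pres_eq (p @ xs @ invw xs @ q) (p @ q)"
proof (induction xs arbitrary: p q)
  case Nil then show ?case by simp
next
  case (Cons x xs)
  have "pres_eq (p @ (x # xs) @ invw (x # xs) @ q) ((p @ [x]) @ xs @ invw xs @ (inv_letter x # q))"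
    by simp
  also have "pres_eq \<dots> ((p @ [x]) @ (inv_letter x # q))" by (rule Cons)
  also have "pres_eq \<dots> (p @ q)"
    by (metis append.assoc append_Cons append_Nil pres_eq_def pres_step.cancel r_into_equivclp)
  finally show ?case .
qed

definition rep :: "grp \<Rightarrow> word" where "rep g = (SOME w. w \<in> g)"

lemma vert_eq_iff: "vert u = vert v \<longleftrightarrow> pres_eq u v"
  unfolding vert_def
  by (auto simp: set_eq_iff intro: pres_eq_trans pres_eq_sym)

lemma rep_vert: "pres_eq u (rep (vert u))"
  unfolding rep_def by (rule someI2[of _ u]) (auto simp: vert_def)

lemma Gset_rep: "g \<in> Gset \<Longrightarrow> vert (rep g) = g"
  unfolding Gset_def using rep_vert vert_eq_iff pres_eq_sym by auto

lemma vert_Gset[simp]: "vert u \<in> Gset" by (simp add: Gset_def)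

lemma gmul_def': "g \<in> Gset \<Longrightarrow> gmul g u = vert (rep g @ u)"
  by (simp add: gmul_def rep_def)

lemma gmul_vert: "gmul (vert u) v = vert (u @ v)"
  using rep_vert[of u] by (simp add: gmul_def' vert_eq_iff pres_eq_app_right pres_eq_sym)

lemma gmul_Gset[simp]: "gmul g u \<in> Gset" by (simp add: gmul_def)

lemma gmul_gmul: "g \<in> Gset \<Longrightarrow> gmul (gmul g u) v = gmul g (u @ v)"
  by (simp add: gmul_def' gmul_vert)

lemma gmul_Nil: "g \<in> Gset \<Longrightarrow> gmul g [] = g"
  by (simp add: gmul_def' Gset_rep)

lemma gmul_cancel: "g \<in> Gset \<Longrightarrow> g' \<in> Gset \<Longrightarrow> gmul g u = gmul g' v \<Longrightarrow> g' = gmul g (u @ invw v)"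
proof -
  assume g: "g \<in> Gset" and g': "g' \<in> Gset" and e: "gmul g u = gmul g' v"
  have "pres_eq (rep g @ u) (rep g' @ v)" using e g g' by (simp add: gmul_def' vert_eq_iff)
  then have "pres_eq (rep g @ u @ invw v) (rep g' @ v @ invw v)"
    using pres_eq_app_right by fastforce
  moreover have "pres_eq (rep g' @ v @ invw v @ []) (rep g' @ [])" by (rule pres_eq_cancel)
  ultimately have "pres_eq (rep g @ u @ invw v) (rep g')" using pres_eq_trans by auto
  then have "vert (rep g @ u @ invw v) = vert (rep g')" by (simp add: vert_eq_iff)
  then show ?thesis using g g' Gset_rep[OF g'] by (simp add: gmul_def')
qed

lemma gmul_inj: "g \<in> Gset \<Longrightarrow> g' \<in> Gset \<Longrightarrow> gmul g u = gmul g' u \<Longrightarrow> g' = g"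
proof -
  assume g: "g \<in> Gset" and g': "g' \<in> Gset" and e: "gmul g u = gmul g' u"
  have "g' = gmul g (u @ invw u)" by (rule gmul_cancel[OF g g' e])
  also have "\<dots> = vert (rep g @ u @ invw u @ [])" using g by (simp add: gmul_def')
  also have "\<dots> = vert (rep g @ [])" using pres_eq_cancel vert_eq_iff by blast
  finally show ?thesis using g Gset_rep by simp
qed

definition tau :: "nat \<Rightarrow> word" where
  "tau i = (if i = 0 then [la, lB, lA] else if i = 1 then [la, lb, la, lB, lA]
            else if i = 2 then [la, lb, lA] else [la, lb, lA, lB, lA])"

definition pt :: "nat \<Rightarrow> grp \<Rightarrow> grp" where "pt i g = gmul g (tau i)"
definition pr :: "nat \<Rightarrow> nat" where "pr i = (i + 2) mod 4"

definition WW :: "nat \<Rightarrow> word" where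
  "WW i = (if i = 0 then [] else if i = 1 then [la] else if i = 2 then [la, lb, lA] else [la, lb, lA, lB])"
definition LL :: "nat \<Rightarrow> gen" where
  "LL i = (if i = 0 \<or> i = 2 then GA else if i = 1 \<or> i = 3 then GB else GC)"

lemma face_edge_WL: "i < 5 \<Longrightarrow> face_edge g i = (gmul g (WW i), LL i)"
proof -
  assume "i < 5"
  then have "i = 0 \<or> i = 1 \<or> i = 2 \<or> i = 3 \<or> i = 4" by auto
  then show ?thesis
    by (elim disjE) (simp_all add: face_edge_def fcorner_def relator_def WW_def LL_def)
qed

lemma edge_lemma:
  assumes g: "g \<in> Gset" and g': "g' \<in> Gset" and i: "i < 5" and j: "j < 5"
    and e: "face_edge g i = face_edge g' j"
  shows "(j = i \<and> g' = g) \<or> (i < 4 \<and> j = pr i \<and> g' = pt i g)"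
proof -
  have L: "LL i = LL j" and G: "gmul g (WW i) = gmul g' (WW j)"
    using e face_edge_WL[OF i] face_edge_WL[OF j] by auto
  have c: "g' = gmul g (WW i @ invw (WW j))" by (rule gmul_cancel[OF g g' G])
  show ?thesis
  proof (cases "i = j")
    case True
    then show ?thesis using G gmul_inj[OF g g'] by auto
  next
    case False
    have "(i = 0 \<and> j = 2) \<or> (i = 2 \<and> j = 0) \<or> (i = 1 \<and> j = 3) \<or> (i = 3 \<and> j = 1)"
      using L False i j unfolding LL_def by (auto split: if_splits)
    then show ?thesis using c
      by (elim disjE) (simp_all add: WW_def pt_def tau_def pr_def)
  qed
qed

definition Y :: "word \<Rightarrow> word" where "Y w = red (lB # lA # theta w)"
definition Yg :: "grp \<Rightarrow> word" where "Yg g = Y (rep g)"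
definition rho :: "grp \<Rightarrow> nat" where "rho g = length (Yg g)"

definition tt :: "nat \<Rightarrow> letter" where
  "tt i = (if i = 0 then lb else if i = 1 then lA else if i = 2 then lB else la)"

lemma Y_pres: "pres_eq u v \<Longrightarrow> Y u = Y v"
  by (simp add: Y_def theta_eq)

lemma Yg_vert: "Yg (vert u) = Y u"
  unfolding Yg_def using Y_pres[OF rep_vert[of u]] by simp

lemma Y_app: "Y (w @ t) = red (lB # lA # invw (phi t) @ invw (phi w))"
proof -
  have "Y (w @ t) = red ([lB, lA] @ red (invw (phi t) @ invw (phi w)))"
    by (simp add: Y_def theta_def)
  also have "\<dots> = red ([lB, lA] @ invw (phi t) @ invw (phi w))"
    by (metis red_append)
  finally show ?thesis by simp
qed

lemma Y_pt: assumes g: "g \<in> Gset" and i: "i < 4"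
  shows "Yg (pt i g) = rstep (tt i) (Yg g)"
proof -
  have "Yg (pt i g) = Y (rep g @ tau i)" by (simp add: pt_def gmul_def' g Yg_vert)
  also have "\<dots> = red (lB # lA # invw (phi (tau i)) @ invw (phi (rep g)))" by (rule Y_app)
  finally have 1: "Yg (pt i g) = red (lB # lA # invw (phi (tau i)) @ invw (phi (rep g)))" .
  have 2: "Yg g = red (lB # lA # invw (phi (rep g)))"
    using Y_app[of "rep g" "[]"] by (simp add: Yg_def)
  have "i = 0 \<or> i = 1 \<or> i = 2 \<or> i = 3" using i by auto
  then show ?thesis unfolding 1 2
    by (elim disjE) (simp_all add: tau_def tt_def phil_def)
qed

lemma rho_pt: "g \<in> Gset \<Longrightarrow> i < 4 \<Longrightarrow> rho (pt i g) = Suc (rho g) \<or> Suc (rho (pt i g)) = rho g"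
  unfolding rho_def using Y_pt rstep_length[of "Yg g"] by (simp add: Yg_def Y_def)

lemma pt_ne: "g \<in> Gset \<Longrightarrow> i < 4 \<Longrightarrow> pt i g \<noteq> g"
  using rho_pt by force

lemma pt_Gset[simp]: "pt i g \<in> Gset" by (simp add: pt_def)

lemma pt_pr: assumes g: "g \<in> Gset" and i: "i < 4" shows "pt (pr i) (pt i g) = g"
proof -
  have p: "pt (pr i) (pt i g) = gmul g (tau i @ tau (pr i))"
    by (simp add: pt_def gmul_gmul g)
  have c: "pres_eq (rep g @ xs @ invw xs @ []) (rep g @ [])" for xs by (rule pres_eq_cancel)
  have "i = 0 \<or> i = 1 \<or> i = 2 \<or> i = 3" using i by auto
  then have "tau i @ tau (pr i) = tau i @ invw (tau i)"
    by (elim disjE) (simp_all add: tau_def pr_def)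
  then have "\<exists>xs. tau i @ tau (pr i) = xs @ invw xs" by blast
  then obtain xs where "tau i @ tau (pr i) = xs @ invw xs" by blast
  then have "gmul g (tau i @ tau (pr i)) = vert (rep g @ [])"
    using c[of xs] by (simp add: gmul_def' g vert_eq_iff)
  then show ?thesis using p g Gset_rep by simp
qed

lemma pr_lt: "i < 4 \<Longrightarrow> pr i < 4" by (simp add: pr_def)
lemma pr_pr: "i < 4 \<Longrightarrow> pr (pr i) = i"
proof -
  assume "i < 4" then have "i = 0 \<or> i = 1 \<or> i = 2 \<or> i = 3" by auto
  then show ?thesis by (elim disjE) (simp_all add: pr_def)
qed

lemma face_edge_inj: assumes g: "g \<in> Gset" shows "inj_on (face_edge g) {..<5}"
proof (rule inj_onI)
  fix i j assume "i \<in> {..<5}" "j \<in> {..<5}" "face_edge g i = face_edge g j"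
  then show "i = j" using edge_lemma[OF g g] pt_ne[OF g] by force
qed

lemma card_face_edges: "g \<in> Gset \<Longrightarrow> card (face_edges g) = 5"
  unfolding face_edges_def using face_edge_inj card_image by fastforce

lemma rho_down_unique:
  assumes g: "g \<in> Gset" and i: "i < 4" and j: "j < 4"
    and "rho (pt i g) < rho g" and "rho (pt j g) < rho g"
  shows "i = j"
proof -
  have "hd (Yg g) = inv_letter (tt i)" "hd (Yg g) = inv_letter (tt j)"
    using assms rstep_shorter Y_pt unfolding rho_def by metis+
  then have "tt i = tt j" by (metis inv_inv)
  then show ?thesis using i j by (auto simp: tt_def split: if_splits)
qed

lemma count_main:
  fixes E :: "edge set" and U :: "grp set"
  assumes fin: "finite U" and UG: "U \<subseteq> Gset" and two: "card U \<ge> 2"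
    and B: "\<And>g i. g \<in> U \<Longrightarrow> i < 5 \<Longrightarrow> \<not> (i < 4 \<and> pt i g \<in> U) \<Longrightarrow> face_edge g i \<in> E"
    and le4: "\<And>g. g \<in> U \<Longrightarrow> card (face_edges g \<inter> E) \<le> 4"
  shows "\<exists>g1\<in>U. \<exists>g2\<in>U. g1 \<noteq> g2 \<and> card (face_edges g1 \<inter> E) = 4 \<and> card (face_edges g2 \<inter> E) = 4"
proof (rule ccontr)
  assume contra: "\<not> ?thesis"
  define n where "n g = card (face_edges g \<inter> E)" for g
  define A where "A g = {i. i < 4 \<and> pt i g \<in> U}" for g
  define nb where "nb g = card (A g)" for g
  have finA: "finite (A g)" for g unfolding A_def by auto
  have n_nb: "n g + nb g \<ge> 5" if g: "g \<in> U" for g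
  proof -
    have gG: "g \<in> Gset" using g UG by auto
    have sub: "face_edge g ` ({..<5} - A g) \<subseteq> face_edges g \<inter> E"
    proof
      fix e assume "e \<in> face_edge g ` ({..<5} - A g)"
      then obtain i where "i < 5" "i \<notin> A g" "e = face_edge g i" by auto
      then show "e \<in> face_edges g \<inter> E" using B[OF g, of i] unfolding face_edges_def A_def by auto
    qed
    have "card (face_edge g ` ({..<5} - A g)) = card ({..<5::nat} - A g)"
      by (rule card_image) (meson Diff_subset face_edge_inj[OF gG] inj_on_subset)
    also have "\<dots> = 5 - nb g"
      unfolding nb_def by (subst card_Diff_subset) (auto simp: A_def)
    finally have "5 - nb g \<le> n g" unfolding n_def
      by (metis card_mono finite_Int finite_imageI face_edges_def finite_lessThan sub)
    then show ?thesis by linarith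
  qed
  define P where "P = Sigma U A"
  define Pd where "Pd = {(g, i) \<in> P. rho (pt i g) < rho g}"
  define Pu where "Pu = {(g, i) \<in> P. rho g < rho (pt i g)}"
  have finP: "finite P" unfolding P_def using fin finA by auto
  have cardP: "card P = (\<Sum>g\<in>U. nb g)" unfolding P_def nb_def
    using card_SigmaI fin finA by auto
  have PdPu: "P = Pd \<union> Pu"
  proof -
    have "rho (pt i g) \<noteq> rho g" if "(g, i) \<in> P" for g i
      using that rho_pt[of g i] UG unfolding P_def A_def by auto
    then show ?thesis unfolding Pd_def Pu_def by (auto simp: linorder_neq_iff)
  qed
  have Une: "U \<noteq> {}" using two by auto
  obtain gm where gm: "gm \<in> U" "\<And>g. g \<in> U \<Longrightarrow> rho gm \<le> rho g"
  proof -
    have "Min (rho ` U) \<in> rho ` U" using fin Une by auto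
    then obtain gm where "gm \<in> U" "rho gm = Min (rho ` U)" by auto
    then show ?thesis using that fin by auto
  qed
  have cPd: "card Pd \<le> card U - 1"
  proof -
    have inj: "inj_on fst Pd"
    proof (rule inj_onI)
      fix x y assume x: "x \<in> Pd" and y: "y \<in> Pd" and e: "fst x = fst y"
      obtain g i where xx: "x = (g, i)" by (cases x)
      obtain h j where yy: "y = (h, j)" by (cases y)
      have "g \<in> Gset" "i < 4" "j < 4" "rho (pt i g) < rho g" "rho (pt j g) < rho g"
        using x y e UG unfolding xx yy Pd_def P_def A_def by auto
      then have "i = j" by (rule rho_down_unique)
      then show "x = y" using e xx yy by simp
    qed
    have im: "fst ` Pd \<subseteq> U - {gm}"
      using gm unfolding Pd_def P_def A_def by (auto, fastforce)
    have "card Pd = card (fst ` Pd)" using card_image[OF inj] by simp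
    also have "\<dots> \<le> card (U - {gm})" by (rule card_mono) (use fin im in auto)
    also have "\<dots> = card U - 1" using gm fin by simp
    finally show ?thesis .
  qed
  have cPu: "card Pu \<le> card Pd"
  proof -
    define f where "f = (\<lambda>(g, i). (pt i g, pr i))"
    have inj: "inj_on f Pu"
    proof (rule inj_onI)
      fix x y assume x: "x \<in> Pu" and y: "y \<in> Pu" and e: "f x = f y"
      obtain g i where xx: "x = (g, i)" by (cases x)
      obtain h j where yy: "y = (h, j)" by (cases y)
      have g: "g \<in> Gset" "i < 4" and h: "h \<in> Gset" "j < 4"
        using x y UG unfolding xx yy Pu_def P_def A_def by auto
      have e1: "pt i g = pt j h" and e2: "pr i = pr j" using e unfolding f_def xx yy by auto
      have ij: "i = j" using e2 pr_pr g h by metis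
      have "g = h" using pt_pr[OF g] pt_pr[OF h] e1 ij by metis
      then show "x = y" using xx yy ij by simp
    qed
    have im: "f ` Pu \<subseteq> Pd"
    proof
      fix y assume "y \<in> f ` Pu"
      then obtain g i where gi: "(g, i) \<in> Pu" and y: "y = (pt i g, pr i)" unfolding f_def by auto
      have g: "g \<in> Gset" "g \<in> U" "i < 4" "pt i g \<in> U" "rho g < rho (pt i g)"
        using gi UG unfolding Pu_def P_def A_def by auto
      show "y \<in> Pd" unfolding y Pd_def P_def A_def
        using g pt_pr[OF g(1) g(3)] pr_lt[OF g(3)] by auto
    qed
    have "card Pu = card (f ` Pu)" using card_image[OF inj] by simp
    also have "\<dots> \<le> card Pd" by (rule card_mono) (use finP im PdPu in auto)
    finally show ?thesis .
  qed
  have "card P \<le> card Pd + card Pu" using PdPu card_Un_le by metis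
  then have cP: "card P \<le> 2 * (card U - 1)" using cPd cPu by linarith
  have "(\<Sum>g\<in>U. 5) \<le> (\<Sum>g\<in>U. n g + nb g)" by (rule sum_mono) (rule n_nb)
  then have S1: "5 * card U \<le> (\<Sum>g\<in>U. n g) + card P" by (simp add: sum.distrib cardP)
  have S2: "(\<Sum>g\<in>U. n g) \<le> 3 * card U + 1"
  proof (cases "\<exists>g0\<in>U. n g0 = 4")
    case True
    then obtain g0 where g0: "g0 \<in> U" "n g0 = 4" by auto
    have o: "n g \<le> 3" if "g \<in> U - {g0}" for g
    proof -
      have "n g \<le> 4" "n g \<noteq> 4" using that contra le4 g0 unfolding n_def by auto
      then show ?thesis by linarith
    qed
    have "(\<Sum>g\<in>U. n g) = n g0 + (\<Sum>g\<in>U - {g0}. n g)" using fin g0 by (simp add: sum.remove)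
    also have "\<dots> \<le> 4 + (\<Sum>g\<in>U - {g0}. 3)" using g0 o sum_mono[of "U - {g0}" n "\<lambda>_. 3"] by simp
    also have "\<dots> = 4 + 3 * (card U - 1)" using g0 fin by simp
    finally show ?thesis using two by linarith
  next
    case False
    have "n g \<le> 3" if "g \<in> U" for g
    proof -
      have "n g \<le> 4" "n g \<noteq> 4" using that False le4 unfolding n_def by auto
      then show ?thesis by linarith
    qed
    then have "(\<Sum>g\<in>U. n g) \<le> (\<Sum>g\<in>U. 3)" by (rule sum_mono)
    then show ?thesis by simp
  qed
  show False using S1 S2 cP two by linarith
qed

definition ends :: "edge \<Rightarrow> grp set" where "ends e = {edge_src e, edge_tgt e}"

lemma sucmod_inj: "q < n \<Longrightarrow> i < n \<Longrightarrow> Suc q mod n = Suc i mod n \<Longrightarrow> q = i"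
  for q i n :: nat
proof -
  assume a: "q < n" "i < n" "Suc q mod n = Suc i mod n"
  have "Suc q mod n = (if Suc q = n then 0 else Suc q)" using a(1) by auto
  moreover have "Suc i mod n = (if Suc i = n then 0 else Suc i)" using a(2) by auto
  ultimately show ?thesis using a by (auto split: if_splits)
qed

lemma cycle_full:
  assumes cyc: "embedded_edge_cycle vs es" and S: "S \<subseteq> set es" "S \<noteq> {}"
    and adj: "\<And>e w. e \<in> S \<Longrightarrow> w \<in> ends e \<Longrightarrow> \<exists>e'\<in>S. e' \<noteq> e \<and> w \<in> ends e'"
  shows "set es \<subseteq> S"
proof -
  define n where "n = length es"
  have len: "length vs = n" "n \<ge> 1" and dv: "distinct vs" and de: "distinct es"
    and en: "\<And>i. i < n \<Longrightarrow> ends (es ! i) = {vs ! i, vs ! (Suc i mod n)}"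
    using cyc unfolding embedded_edge_cycle_def n_def ends_def by auto
  have step: "es ! (Suc i mod n) \<in> S" if i: "i < n" and ei: "es ! i \<in> S" for i
  proof (rule ccontr)
    assume nS: "es ! (Suc i mod n) \<notin> S"
    have sn: "Suc i mod n < n" using len by auto
    have w: "vs ! (Suc i mod n) \<in> ends (es ! i)" using en[OF i] by auto
    obtain e' where e': "e' \<in> S" "e' \<noteq> es ! i" "vs ! (Suc i mod n) \<in> ends e'"
      using adj[OF ei w] by blast
    have "e' \<in> set es" using e'(1) S(1) by blast
    then obtain q where q: "q < n" "e' = es ! q" unfolding in_set_conv_nth n_def by blast
    have sq: "Suc q mod n < n" using len by auto
    have "vs ! (Suc i mod n) = vs ! q \<or> vs ! (Suc i mod n) = vs ! (Suc q mod n)"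
      using e'(3) en[OF q(1)] q(2) by auto
    then show False
    proof
      assume "vs ! (Suc i mod n) = vs ! q"
      then have "Suc i mod n = q" using nth_eq_iff_index_eq[OF dv] len sn q(1) by simp
      then show False using nS e' q by simp
    next
      assume "vs ! (Suc i mod n) = vs ! (Suc q mod n)"
      then have "Suc i mod n = Suc q mod n" using nth_eq_iff_index_eq[OF dv] len sn sq by simp
      then have "q = i" using sucmod_inj q(1) i by simp
      then show False using e' q by simp
    qed
  qed
  obtain e0 where "e0 \<in> S" using S by blast
  then have "e0 \<in> set es" using S by blast
  then obtain i0 where i0: "i0 < n" "es ! i0 = e0" unfolding in_set_conv_nth n_def by blast
  have i0S: "es ! i0 \<in> S" using i0 \<open>e0 \<in> S\<close> by simp
  have all: "es ! ((i0 + d) mod n) \<in> S" for d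
  proof (induction d)
    case 0 then show ?case using i0S i0 by simp
  next
    case (Suc d)
    have "(i0 + d) mod n < n" using len by auto
    then have "es ! (Suc ((i0 + d) mod n) mod n) \<in> S"
      using step Suc by blast
    then show ?case by (simp add: mod_Suc_eq)
  qed
  show ?thesis
  proof
    fix e assume "e \<in> set es"
    then obtain k where k: "k < n" "e = es ! k" unfolding in_set_conv_nth n_def by blast
    have "(i0 + (n - i0 + k)) mod n = k" using k i0 by simp
    then show "e \<in> S" using all[of "n - i0 + k"] k by simp
  qed
qed

definition fc :: "grp \<Rightarrow> nat \<Rightarrow> grp" where "fc g k = gmul g (take k relator)"

lemma gmul_cancel_mid: "g \<in> Gset \<Longrightarrow> gmul g (p @ [l, inv_letter l] @ q) = gmul g (p @ q)"
proof -
  assume g: "g \<in> Gset"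
  have "pres_step ((rep g @ p) @ [l, inv_letter l] @ q) ((rep g @ p) @ q)" by (rule pres_step.cancel)
  then have "pres_eq (rep g @ p @ [l, inv_letter l] @ q) (rep g @ p @ q)" unfolding pres_eq_def by auto
  then show ?thesis using g by (simp add: gmul_def' vert_eq_iff)
qed

lemma gmul_rel_mid: "g \<in> Gset \<Longrightarrow> gmul g (p @ relator @ q) = gmul g (p @ q)"
proof -
  assume g: "g \<in> Gset"
  have "pres_step ((rep g @ p) @ relator @ q) ((rep g @ p) @ q)" by (rule pres_step.rel)
  then have "pres_eq (rep g @ p @ relator @ q) (rep g @ p @ q)" unfolding pres_eq_def by auto
  then show ?thesis using g by (simp add: gmul_def' vert_eq_iff)
qed

lemma ends_face_edge:
  assumes g: "g \<in> Gset" and j: "j < 5"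
  shows "ends (face_edge g j) = {fc g j, fc g (Suc j mod 5)}"
proof -
  have tg: "edge_tgt (gmul g u, x) = gmul g (u @ [(x, True)])" for u x
    by (simp add: edge_tgt_def gmul_gmul g)
  have c2: "gmul g [la, lb, lA, la] = gmul g [la, lb]"
    using gmul_cancel_mid[OF g, of "[la, lb]" lA "[]"] by simp
  have c3: "gmul g [la, lb, lA, lB, lb] = gmul g [la, lb, lA]"
    using gmul_cancel_mid[OF g, of "[la, lb, lA]" lB "[]"] by simp
  have c4: "gmul g [la, lb, lA, lB, (GC, True)] = gmul g []"
    using gmul_rel_mid[OF g, of "[]" "[]"] by (simp add: relator_def)
  have "j = 0 \<or> j = 1 \<or> j = 2 \<or> j = 3 \<or> j = 4" using j by auto
  then show ?thesis
    by (elim disjE) (auto simp: face_edge_WL ends_def edge_src_def tg WW_def LL_def fc_def relator_def c2 c3 c4)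
qed

lemma corner_adj:
  assumes g: "g \<in> Gset" and j: "j < 5" and w: "w \<in> ends (face_edge g j)"
  shows "\<exists>j'<5. j' \<noteq> j \<and> w \<in> ends (face_edge g j')"
proof -
  have "w = fc g j \<or> w = fc g (Suc j mod 5)" using w ends_face_edge[OF g j] by auto
  then show ?thesis
  proof
    assume w: "w = fc g j"
    define j' where "j' = (j + 4) mod 5"
    have jj: "j = 0 \<or> j = 1 \<or> j = 2 \<or> j = 3 \<or> j = 4" using j by auto
    have "j' < 5" "j' \<noteq> j" "Suc j' mod 5 = j" using jj unfolding j'_def by auto
    then show ?thesis using ends_face_edge[OF g, of j'] w by auto
  next
    assume w: "w = fc g (Suc j mod 5)"
    define j' where "j' = Suc j mod 5"
    have jj: "j = 0 \<or> j = 1 \<or> j = 2 \<or> j = 3 \<or> j = 4" using j by auto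
    have "j' < 5" "j' \<noteq> j" using jj unfolding j'_def by auto
    then show ?thesis using ends_face_edge[OF g, of j'] w j'_def by (intro exI[of _ j']) auto
  qed
qed

lemma le4_lemma:
  assumes cyc: "embedded_edge_cycle vs es" and g: "g \<in> Gset" and g': "g' \<in> Gset" and ne: "g' \<noteq> g"
    and c: "face_edge g' 4 \<in> set es"
  shows "card (face_edges g \<inter> set es) \<le> 4"
proof (rule ccontr)
  assume "\<not> ?thesis"
  then have "card (face_edges g \<inter> set es) \<ge> card (face_edges g)" using card_face_edges[OF g] by simp
  then have sub: "face_edges g \<subseteq> set es"
  proof -
    have "finite (face_edges g)" unfolding face_edges_def by simp
    then have "face_edges g \<inter> set es = face_edges g"
      using card_seteq[of "face_edges g" "face_edges g \<inter> set es"] \<open>card (face_edges g \<inter> set es) \<ge> card (face_edges g)\<close>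
      by blast
    then show ?thesis by blast
  qed
  have "set es \<subseteq> face_edges g"
  proof (rule cycle_full[OF cyc sub])
    have "face_edge g 0 \<in> face_edges g" unfolding face_edges_def by simp
    then show "face_edges g \<noteq> {}" by blast
  next
    fix e w assume e: "e \<in> face_edges g" and w: "w \<in> ends e"
    then obtain j where j: "j < 5" "e = face_edge g j" unfolding face_edges_def by auto
    then obtain j' where "j' < 5" "j' \<noteq> j" "w \<in> ends (face_edge g j')" using corner_adj[OF g] w by blast
    moreover have "face_edge g j' \<noteq> face_edge g j"
      using face_edge_inj[OF g] j(1) \<open>j' < 5\<close> \<open>j' \<noteq> j\<close> by (auto dest: inj_onD)
    ultimately show "\<exists>e'\<in>face_edges g. e' \<noteq> e \<and> w \<in> ends e'" using j unfolding face_edges_def by auto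
  qed
  then obtain j where "j < 5" "face_edge g' 4 = face_edge g j" using c unfolding face_edges_def by auto
  then show False using edge_lemma[OF g' g, of 4 j] ne by auto
qed

definition cc :: "int \<Rightarrow> real" where "cc d = cos (2 * pi * of_int d / 5)"

lemma cos_shift_int: "cos (x + 2 * pi * of_int n) = cos x"
  by (simp add: cos_add)

lemma cis_shift_int: "cis (x + 2 * pi * of_int n) = cis x"
  by (simp add: cis.ctr cos_shift_int sin_add)

lemma cc_mod: "cc d = cc (d mod 5)"
proof -
  have "2 * pi * of_int d / 5 = 2 * pi * of_int (d mod 5) / 5 + 2 * pi * of_int (d div 5)"
  proof -
    have "d = d mod 5 + 5 * (d div 5)" by simp
    then have "(of_int d :: real) = of_int (d mod 5) + 5 * of_int (d div 5)"
      by (metis of_int_add of_int_mult of_int_numeral)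
    then show ?thesis by (simp add: field_simps)
  qed
  then show ?thesis unfolding cc_def by (simp only: cos_shift_int)
qed

lemma cc_4: "cc 4 = cc 1"
proof -
  have "2 * pi * 4 / 5 = - (2 * pi / 5) + 2 * pi * of_int 1" by simp
  then show ?thesis unfolding cc_def by (metis cos_minus cos_shift_int of_int_numeral of_int_1 mult_1_right)
qed

lemma cc_3: "cc 3 = cc 2"
proof -
  have "2 * pi * 3 / 5 = - (2 * pi * 2 / 5) + 2 * pi * of_int 1" by simp
  then show ?thesis unfolding cc_def by (metis cos_minus cos_shift_int of_int_numeral of_int_1 mult_1_right)
qed

lemma cc_0: "cc 0 = 1" by (simp add: cc_def)

lemma cc_21: "cc 2 < cc 1"
  unfolding cc_def by (rule cos_monotone_0_pi) (auto simp: field_simps)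

lemma cc_1: "cc 1 < 1"
  using cos_monotone_0_pi[of 0 "2 * pi / 5"] unfolding cc_def by (simp add: field_simps)

lemma cc_2: "-1 \<le> cc 2" unfolding cc_def by simp

lemma cc_vals: "cc d = (if d mod 5 = 0 then 1 else if d mod 5 = 1 \<or> d mod 5 = 4 then cc 1 else cc 2)"
proof -
  have "d mod 5 \<in> {0,1,2,3,4}" by auto
  then show ?thesis using cc_mod[of d] cc_0 cc_4 cc_3 by auto
qed

lemma cc_tab: "cc (-1) = cc 1" "cc (-2) = cc 2" "cc (-3) = cc 2" "cc (-4) = cc 1"
  "cc 5 = 1" "cc (-5) = 1" "cc 3 = cc 2" "cc 4 = cc 1" "cc 0 = 1"
  using cc_mod[of "-1"] cc_mod[of "-2"] cc_mod[of "-3"] cc_mod[of "-4"] cc_mod[of "5"] cc_mod[of "-5"]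
    cc_4 cc_3 cc_0 by simp_all

lemma pc_inner: "inner (pc a) (pc b) = cc (int a - int b)"
  unfolding pc_def cc_def inner_complex_def
  by (simp add: cos_diff[symmetric] field_simps)

lemma pc_mod: "pc n = pc (n mod 5)"
proof -
  have "2 * pi * real n / 5 = 2 * pi * real (n mod 5) / 5 + 2 * pi * of_int (int (n div 5))"
  proof -
    have "n = n mod 5 + 5 * (n div 5)" by simp
    then have "real n = real (n mod 5) + 5 * real (n div 5)" by (metis of_nat_add of_nat_mult of_nat_numeral)
    then show ?thesis by (simp add: field_simps)
  qed
  then show ?thesis unfolding pc_def by (simp only: cis_shift_int)
qed

lemma pc_norm[simp]: "norm (pc k) = 1" by (simp add: pc_def)

definition nrm :: "nat \<Rightarrow> complex" where "nrm i = pc i + pc (Suc i)"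
definition ell :: "nat \<Rightarrow> complex \<Rightarrow> real" where "ell i p = inner (nrm i) p"
definition MM :: real where "MM = 1 + cc 1"

lemma ell_pc: "ell i (pc k) = cc (int i - int k) + cc (int (Suc i) - int k)"
  unfolding ell_def nrm_def by (simp add: inner_add_left pc_inner)

lemma ell_vertex:
  assumes i: "i < 5"
  shows "ell i (pc k) = (if k mod 5 = i \<or> k mod 5 = Suc i mod 5 then MM else ell i (pc k))"
    and "\<not> (k mod 5 = i \<or> k mod 5 = Suc i mod 5) \<Longrightarrow> ell i (pc k) < MM"
proof -
  have pk: "ell i (pc k) = ell i (pc (k mod 5))" using pc_mod by metis
  have kk: "k mod 5 = 0 \<or> k mod 5 = 1 \<or> k mod 5 = 2 \<or> k mod 5 = 3 \<or> k mod 5 = 4" by auto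
  have ii: "i = 0 \<or> i = 1 \<or> i = 2 \<or> i = 3 \<or> i = 4" using i by auto
  have "(k mod 5 = i \<or> k mod 5 = Suc i mod 5 \<longrightarrow> ell i (pc (k mod 5)) = MM) \<and>
        (\<not> (k mod 5 = i \<or> k mod 5 = Suc i mod 5) \<longrightarrow> ell i (pc (k mod 5)) < MM)"
    using kk ii cc_21 cc_1
    by (elim disjE) (simp_all add: ell_pc MM_def cc_tab)
  then show "ell i (pc k) = (if k mod 5 = i \<or> k mod 5 = Suc i mod 5 then MM else ell i (pc k))"
    and "\<not> (k mod 5 = i \<or> k mod 5 = Suc i mod 5) \<Longrightarrow> ell i (pc k) < MM"
    using pk by auto
qed

definition comb :: "nat \<Rightarrow> real \<Rightarrow> complex" where
  "comb i t = of_real (1 - t) * pc i + of_real t * pc (Suc i)"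

lemma comb_scaleR: "comb i t = (1 - t) *\<^sub>R pc i + t *\<^sub>R pc (Suc i)"
  by (simp add: comb_def scaleR_conv_of_real)

lemma ell_lin: "ell i ((1 - t) *\<^sub>R a + t *\<^sub>R b) = (1 - t) * ell i a + t * ell i b"
  by (simp add: ell_def inner_add_right)

lemma MM_vert: "i < 5 \<Longrightarrow> ell i (pc i) = MM" "i < 5 \<Longrightarrow> ell i (pc (Suc i)) = MM"
proof -
  assume i: "i < 5"
  show "ell i (pc i) = MM" using ell_vertex(1)[OF i, of i] i by simp
  have "Suc i mod 5 = Suc i mod 5" by simp
  then show "ell i (pc (Suc i)) = MM" using ell_vertex(1)[OF i, of "Suc i"] by simp
qed

lemma pc_ne: "i < 5 \<Longrightarrow> pc i \<noteq> pc (Suc i)"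
proof
  assume i: "i < 5" and e: "pc i = pc (Suc i)"
  have "inner (pc i) (pc (Suc i)) = cc (-1)" by (simp add: pc_inner)
  moreover have "inner (pc i) (pc i) = 1" by (simp add: pc_inner cc_tab)
  ultimately show False using e cc_1 cc_tab by simp
qed

lemma comb_inj: "i < 5 \<Longrightarrow> comb i t = comb i t' \<Longrightarrow> t = t'"
proof -
  assume i: "i < 5" and e: "comb i t = comb i t'"
  have "(t - t') *\<^sub>R (pc (Suc i) - pc i) = 0" using e unfolding comb_scaleR
    by (simp add: algebra_simps)
  then show ?thesis using pc_ne[OF i] by auto
qed

lemma ell_le_MM: assumes i: "i < 5" and p: "p \<in> Pent" shows "ell i p \<le> MM"
proof -
  have "Pent \<subseteq> {x. inner (nrm i) x \<le> MM}"
    unfolding Pent_def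
  proof (rule hull_minimal)
    show "pc ` {..<5} \<subseteq> {x. inner (nrm i) x \<le> MM}"
    proof
      fix x assume "x \<in> pc ` {..<5}"
      then obtain k where k: "k < 5" "x = pc k" by auto
      show "x \<in> {x. inner (nrm i) x \<le> MM}"
        using ell_vertex[OF i, of k] k unfolding ell_def by (cases "k mod 5 = i \<or> k mod 5 = Suc i mod 5") auto
    qed
  qed (rule convex_halfspace_le)
  then show ?thesis using p unfolding ell_def by auto
qed

lemma pc_in_Pent: "pc k \<in> Pent"
  using pc_mod[of k] unfolding Pent_def by (metis hull_inc imageI lessThan_iff mod_less_divisor zero_less_numeral)

lemma comb_in_Pent: "0 \<le> t \<Longrightarrow> t \<le> 1 \<Longrightarrow> comb i t \<in> Pent"
  unfolding comb_scaleR Pent_def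
  by (rule convexD) (auto simp: convex_convex_hull pc_in_Pent[unfolded Pent_def])

definition mid :: "nat \<Rightarrow> complex" where "mid i = comb i (1/2)"

lemma ell_mid: "i < 5 \<Longrightarrow> ell i (mid i) = MM"
  unfolding mid_def comb_scaleR using ell_lin[of i "1/2" "pc i" "pc (Suc i)"] MM_vert
  by simp

lemma mid_in_Pent: "mid i \<in> Pent" unfolding mid_def by (rule comb_in_Pent) auto

lemma nrm_ne: "i < 5 \<Longrightarrow> nrm i \<noteq> 0"
proof
  assume i: "i < 5" and "nrm i = 0"
  then have "ell i (pc i) = 0" by (simp add: ell_def)
  then show False using MM_vert[OF i] cc_21 cc_2 unfolding MM_def by simp
qed

lemma mid_not_interior:
  assumes i: "i < 5" and e: "e > 0" shows "\<not> ball (mid i) e \<subseteq> Pent"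
proof
  assume sub: "ball (mid i) e \<subseteq> Pent"
  define s where "s = e / (2 * norm (nrm i))"
  have nn: "norm (nrm i) > 0" using nrm_ne[OF i] by simp
  have s: "s > 0" using e nn unfolding s_def by simp
  define p where "p = mid i + s *\<^sub>R nrm i"
  have "dist (mid i) p = s * norm (nrm i)" unfolding p_def using s by (simp add: dist_norm)
  also have "\<dots> = e / 2" unfolding s_def using nn by simp
  finally have "p \<in> ball (mid i) e" using e by simp
  then have "p \<in> Pent" using sub by auto
  then have "ell i p \<le> MM" by (rule ell_le_MM[OF i])
  moreover have "ell i p = MM + s * inner (nrm i) (nrm i)"
    unfolding p_def using ell_mid[OF i] by (simp add: ell_def inner_add_right)
  moreover have "inner (nrm i) (nrm i) > 0" using nrm_ne[OF i] by simp
  ultimately show False using s by (smt (verit) mult_pos_pos)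
qed

definition CC :: "nat \<Rightarrow> complex set" where
  "CC i = (\<Union>j\<in>{..<5} - {i}. closed_segment (pc j) (pc (Suc j)))"

lemma closed_CC: "closed (CC i)"
  unfolding CC_def by (intro closed_UN) auto

lemma mid_notin_CC: assumes i: "i < 5" shows "mid i \<notin> CC i"
proof
  assume "mid i \<in> CC i"
  then obtain j u where j: "j < 5" "j \<noteq> i" and u: "0 \<le> u" "u \<le> 1"
    and m: "mid i = (1 - u) *\<^sub>R pc j + u *\<^sub>R pc (Suc j)"
    unfolding CC_def closed_segment_def by auto
  have em: "MM = (1 - u) * ell i (pc j) + u * ell i (pc (Suc j))"
    using ell_mid[OF i] unfolding m ell_lin by simp
  have j5: "j mod 5 = j" using j by simp
  have le1: "ell i (pc j) \<le> MM" and le2: "ell i (pc (Suc j)) \<le> MM"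
    using ell_le_MM[OF i] pc_in_Pent by auto
  have mid0: "mid i \<noteq> pc i" using comb_inj[OF i, of "1/2" 0] unfolding mid_def comb_scaleR by auto
  have mid1: "mid i \<noteq> pc (Suc i)" using comb_inj[OF i, of "1/2" 1] unfolding mid_def comb_scaleR by auto
  have ii: "i = 0 \<or> i = 1 \<or> i = 2 \<or> i = 3 \<or> i = 4" using i by auto
  have jj: "j = 0 \<or> j = 1 \<or> j = 2 \<or> j = 3 \<or> j = 4" using j by auto
  consider "j = Suc i mod 5" | "Suc j mod 5 = i" | "j \<noteq> Suc i mod 5" "Suc j mod 5 \<noteq> i" by blast
  then show False
  proof cases
    case 1
    have "Suc j mod 5 \<noteq> i \<and> Suc j mod 5 \<noteq> Suc i mod 5" using 1 ii jj by (elim disjE; simp)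
    then have lt: "ell i (pc (Suc j)) < MM" using ell_vertex(2)[OF i, of "Suc j"] by auto
    have "u = 0"
    proof (rule ccontr)
      assume "u \<noteq> 0" then have "u > 0" using u by simp
      then have "u * ell i (pc (Suc j)) < u * MM" using lt by simp
      moreover have "(1 - u) * ell i (pc j) \<le> (1 - u) * MM" using le1 u by (simp add: mult_left_mono)
      ultimately show False using em by (simp add: algebra_simps)
    qed
    then have "mid i = pc j" using m by simp
    also have "pc j = pc (Suc i)" using 1 pc_mod by metis
    finally show False using mid1 by simp
  next
    case 2
    have "j mod 5 \<noteq> i \<and> j mod 5 \<noteq> Suc i mod 5" using 2 ii jj \<open>j \<noteq> i\<close> by (elim disjE; simp)
    then have lt: "ell i (pc j) < MM" using ell_vertex(2)[OF i, of j] by auto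
    have "u = 1"
    proof (rule ccontr)
      assume "u \<noteq> 1" then have "1 - u > 0" using u by simp
      then have "(1 - u) * ell i (pc j) < (1 - u) * MM" using lt by simp
      moreover have "u * ell i (pc (Suc j)) \<le> u * MM" using le2 u by (simp add: mult_left_mono)
      ultimately show False using em by (simp add: algebra_simps)
    qed
    then have "mid i = pc (Suc j)" using m by simp
    also have "pc (Suc j) = pc i" using 2 pc_mod by metis
    finally show False using mid0 by simp
  next
    case 3
    have A: "ell i (pc j) < MM" using ell_vertex(2)[OF i, of j] 3 j by auto
    have "Suc j mod 5 \<noteq> i \<and> Suc j mod 5 \<noteq> Suc i mod 5" using 3 ii jj \<open>j \<noteq> i\<close> by (elim disjE; simp)
    then have B: "ell i (pc (Suc j)) < MM" using ell_vertex(2)[OF i, of "Suc j"] by blast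
    have "(1 - u) * ell i (pc j) + u * ell i (pc (Suc j)) < (1 - u) * MM + u * MM"
    proof (cases "u = 0")
      case True then show ?thesis using A B by simp
    next
      case False
      then have "u * ell i (pc (Suc j)) < u * MM" using u A B by simp
      moreover have "(1 - u) * ell i (pc j) \<le> (1 - u) * MM" using u A B by (simp add: mult_left_mono)
      ultimately show ?thesis by simp
    qed
    then show False using em by (simp add: algebra_simps)
  qed
qed

lemma near_mid:
  assumes i: "i < 5"
  obtains d where "d > 0" "\<And>p. dist (mid i) p < d \<Longrightarrow> p \<notin> pc ` {..<5}"
    "\<And>p j t. dist (mid i) p < d \<Longrightarrow> j < 5 \<Longrightarrow> 0 < t \<Longrightarrow> t < 1 \<Longrightarrow> p = comb j t \<Longrightarrow> j = i"
proof -
  obtain d where d: "d > 0" "\<And>x. x \<in> CC i \<Longrightarrow> d \<le> dist (mid i) x"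
    using separate_point_closed[OF closed_CC mid_notin_CC[OF i]] by blast
  have vC: "pc k \<in> CC i" if k: "k < 5" for k
  proof (cases "k = i")
    case False
    then show ?thesis unfolding CC_def using k by (auto intro!: bexI[of _ k])
  next
    case True
    define j where "j = (i + 4) mod 5"
    have ii: "i = 0 \<or> i = 1 \<or> i = 2 \<or> i = 3 \<or> i = 4" using i by auto
    have "j < 5 \<and> j \<noteq> i \<and> Suc j mod 5 = i" using ii unfolding j_def by (elim disjE; simp)
    then have "j < 5" "j \<noteq> i" "Suc j mod 5 = i" by auto
    then have "pc (Suc j) = pc k" using True pc_mod by metis
    then show ?thesis unfolding CC_def using \<open>j < 5\<close> \<open>j \<noteq> i\<close> by (auto intro!: bexI[of _ j])
  qed
  show ?thesis
  proof (rule that[OF d(1)])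
    fix p assume "dist (mid i) p < d"
    then show "p \<notin> pc ` {..<5}" using d(2) vC by fastforce
  next
    fix p j t assume p: "dist (mid i) p < d" and j: "j < 5" and t: "0 < t" "t < 1" and pe: "p = comb j t"
    show "j = i"
    proof (rule ccontr)
      assume "j \<noteq> i"
      then have "p \<in> CC i" unfolding CC_def closed_segment_def pe comb_scaleR using j t
        by (auto intro!: bexI[of _ j])
      then show False using d(2) p by fastforce
    qed
  qed
qed

definition prm :: "nat \<Rightarrow> real \<Rightarrow> real" where
  "prm i t = (if snd (relator ! i) then t else 1 - t)"

definition SX :: "complex \<Rightarrow> nat \<times> real" where
  "SX p = (SOME (i, t). i < 5 \<and> 0 < t \<and> t < 1 \<and> p = of_real (1 - t) * pc i + of_real t * pc (Suc i))"

lemma canon_alt: "canon g p =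
    (if \<exists>i<5. p = pc i then Vtx (fcorner g (SOME i. i < 5 \<and> p = pc i))
     else if \<exists>i<5. \<exists>t. 0 < t \<and> t < 1 \<and> p = comb i t
     then EdgePt (face_edge g (fst (SX p))) (prm (fst (SX p)) (snd (SX p)))
     else FacePt g p)"
  unfolding canon_def SX_def comb_def prm_def by (simp add: case_prod_beta) blast

lemma SX_prop: "\<exists>i<5. \<exists>t. 0 < t \<and> t < 1 \<and> p = comb i t \<Longrightarrow>
   fst (SX p) < 5 \<and> 0 < snd (SX p) \<and> snd (SX p) < 1 \<and> p = comb (fst (SX p)) (snd (SX p))"
proof -
  assume "\<exists>i<5. \<exists>t. 0 < t \<and> t < 1 \<and> p = comb i t"
  then obtain i t where it: "i < 5" "0 < t" "t < 1" "p = comb i t" by blast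
  have "case SX p of (i, t) \<Rightarrow> i < 5 \<and> 0 < t \<and> t < 1 \<and> p = of_real (1 - t) * pc i + of_real t * pc (Suc i)"
    unfolding SX_def by (rule someI[of _ "(i, t)"]) (use it in \<open>simp add: comb_def\<close>)
  then show ?thesis by (simp add: case_prod_beta comb_def)
qed

lemma canon_edge:
  assumes i: "i < 5" and t: "0 < t" "t < 1" and p: "p = comb i t"
    and nv: "\<And>k. k < 5 \<Longrightarrow> p \<noteq> pc k"
    and uq: "\<And>j t'. j < 5 \<Longrightarrow> 0 < t' \<Longrightarrow> t' < 1 \<Longrightarrow> p = comb j t' \<Longrightarrow> j = i"
  shows "canon g p = EdgePt (face_edge g i) (prm i t)"
proof -
  have ex: "\<exists>i<5. \<exists>t. 0 < t \<and> t < 1 \<and> p = comb i t" using i t p by blast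
  note sx = SX_prop[OF ex]
  have fi: "fst (SX p) = i" using uq sx by blast
  have "snd (SX p) = t" using comb_inj[OF i] sx p fi by metis
  then show ?thesis unfolding canon_alt using nv ex fi by auto
qed

lemma canon_face:
  assumes nv: "\<And>k. k < 5 \<Longrightarrow> p \<noteq> pc k"
    and ne: "\<not> (\<exists>i<5. \<exists>t. 0 < t \<and> t < 1 \<and> p = comb i t)"
  shows "canon g p = FacePt g p"
  unfolding canon_alt using nv ne by auto

lemma canon_cases_edge:
  assumes "canon g p = EdgePt e s"
  shows "\<exists>j<5. \<exists>t. 0 < t \<and> t < 1 \<and> p = comb j t \<and> e = face_edge g j \<and> s = prm j t"
proof -
  have nv: "\<not> (\<exists>i<5. p = pc i)" using assms unfolding canon_alt by (auto split: if_splits)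
  have ex: "\<exists>i<5. \<exists>t. 0 < t \<and> t < 1 \<and> p = comb i t" using assms nv unfolding canon_alt by (auto split: if_splits)
  note sx = SX_prop[OF ex]
  have "e = face_edge g (fst (SX p))" "s = prm (fst (SX p)) (snd (SX p))"
    using assms nv ex unfolding canon_alt by auto
  then show ?thesis using sx by blast
qed

lemma canon_cases_face:
  assumes "canon g p = FacePt g' q" shows "g' = g \<and> q = p"
  using assms unfolding canon_alt by (auto split: if_splits)

lemma prm_inj: "prm i t = prm i t' \<Longrightarrow> t = t'"
  unfolding prm_def by (auto split: if_splits)

definition XX :: "(grp \<times> complex) topology" where
  "XX = prod_topology (discrete_topology Gset) (top_of_set Pent)"
definition QQ :: "grp \<times> complex \<Rightarrow> grp pt" where "QQ = (\<lambda>(g, p). canon g p)"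

lemma topspace_XX: "topspace XX = Gset \<times> Pent" by (simp add: XX_def)

lemma istop_quot: "istopology (\<lambda>V. V \<subseteq> f ` topspace X \<and> openin X {x \<in> topspace X. f x \<in> V})"
proof -
  have 1: "\<forall>S T. (S \<subseteq> f ` topspace X \<and> openin X {x \<in> topspace X. f x \<in> S}) \<longrightarrow>
      (T \<subseteq> f ` topspace X \<and> openin X {x \<in> topspace X. f x \<in> T}) \<longrightarrow>
      (S \<inter> T \<subseteq> f ` topspace X \<and> openin X {x \<in> topspace X. f x \<in> S \<inter> T})"
  proof (intro allI impI)
    fix S T assume S: "S \<subseteq> f ` topspace X \<and> openin X {x \<in> topspace X. f x \<in> S}"
      and T: "T \<subseteq> f ` topspace X \<and> openin X {x \<in> topspace X. f x \<in> T}"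
    have "{x \<in> topspace X. f x \<in> S \<inter> T} = {x \<in> topspace X. f x \<in> S} \<inter> {x \<in> topspace X. f x \<in> T}" by auto
    then show "S \<inter> T \<subseteq> f ` topspace X \<and> openin X {x \<in> topspace X. f x \<in> S \<inter> T}"
      using S T by auto
  qed
  have 2: "\<forall>K. (\<forall>S\<in>K. S \<subseteq> f ` topspace X \<and> openin X {x \<in> topspace X. f x \<in> S}) \<longrightarrow>
     (\<Union>K \<subseteq> f ` topspace X \<and> openin X {x \<in> topspace X. f x \<in> \<Union>K})"
  proof (intro allI impI)
    fix K assume K: "\<forall>S\<in>K. S \<subseteq> f ` topspace X \<and> openin X {x \<in> topspace X. f x \<in> S}"
    have "{x \<in> topspace X. f x \<in> \<Union>K} = \<Union>((\<lambda>S. {x \<in> topspace X. f x \<in> S}) ` K)" by auto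
    then show "\<Union>K \<subseteq> f ` topspace X \<and> openin X {x \<in> topspace X. f x \<in> \<Union>K}"
      using K by auto
  qed
  show ?thesis unfolding istopology_def using 1 2 by blast
qed

lemma K_open: "openin K_top S \<longleftrightarrow> S \<subseteq> QQ ` topspace XX \<and> openin XX {x \<in> topspace XX. QQ x \<in> S}"
  unfolding K_top_def quotient_topology_def XX_def[symmetric] QQ_def[symmetric]
  using topology_inverse'[OF istop_quot[of QQ XX]] by simp

lemma topspace_K: "topspace K_top = QQ ` topspace XX"
proof -
  have e: "{x \<in> topspace XX. QQ x \<in> QQ ` topspace XX} = topspace XX" by auto
  have "openin K_top (QQ ` topspace XX)" unfolding K_open e by auto
  then have "QQ ` topspace XX \<subseteq> topspace K_top" by (rule openin_subset)
  moreover have "topspace K_top \<subseteq> QQ ` topspace XX"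
    using K_open openin_topspace by blast
  ultimately show ?thesis by blast
qed

lemma QQ_cont: "continuous_map XX K_top QQ"
  unfolding continuous_map_def using K_open topspace_K by auto

lemma real_faces_QQ: "real_faces U = QQ ` (U \<times> Pent)"
  by (simp add: real_faces_def QQ_def)


lemma key_local:
  assumes UG: "U \<subseteq> Gset" and g: "g \<in> U" and i: "i < 5"
    and unsh: "\<forall>g'\<in>U. g' \<noteq> g \<longrightarrow> face_edge g i \<notin> face_edges g'"
    and d: "\<And>p. dist (mid i) p < d \<Longrightarrow> p \<notin> pc ` {..<5}"
      "\<And>p j t. dist (mid i) p < d \<Longrightarrow> j < 5 \<Longrightarrow> 0 < t \<Longrightarrow> t < 1 \<Longrightarrow> p = comb j t \<Longrightarrow> j = i"
    and p: "dist (mid i) p < d" and g'': "g'' \<in> U" and e: "canon g'' p'' = canon g p"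
  shows "g'' = g \<and> p'' = p"
proof -
  have gG: "g \<in> Gset" using g UG by auto
  have nv: "\<And>k. k < 5 \<Longrightarrow> p \<noteq> pc k" using d(1)[OF p] by auto
  show ?thesis
  proof (cases "\<exists>t. 0 < t \<and> t < 1 \<and> p = comb i t")
    case True
    then obtain t where t: "0 < t" "t < 1" "p = comb i t" by blast
    have c: "canon g p = EdgePt (face_edge g i) (prm i t)"
      by (rule canon_edge[OF i t nv]) (use d(2)[OF p] in auto)
    obtain j t'' where j: "j < 5" "0 < t''" "t'' < 1" "p'' = comb j t''"
      "face_edge g i = face_edge g'' j" "prm i t = prm j t''"
      using canon_cases_edge[of g'' p'' "face_edge g i" "prm i t"] e c by metis
    have gg: "g'' = g"
    proof (rule ccontr)
      assume "g'' \<noteq> g"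
      then have "face_edge g i \<notin> face_edges g''" using unsh g'' by blast
      then show False using j unfolding face_edges_def by auto
    qed
    have "j = i" using j(5) gg face_edge_inj[OF gG] j(1) i by (auto dest: inj_onD)
    then have "t'' = t" using j(6) prm_inj by metis
    then show ?thesis using gg j \<open>j = i\<close> t by simp
  next
    case False
    have ne: "\<not> (\<exists>j<5. \<exists>t. 0 < t \<and> t < 1 \<and> p = comb j t)"
      using False d(2)[OF p] by blast
    have "canon g p = FacePt g p" by (rule canon_face[OF nv ne])
    then show ?thesis using canon_cases_face e by metis
  qed
qed


lemma compact_Pent: "compact Pent"
  unfolding Pent_def by (rule compact_convex_hull) (simp add: finite_imp_compact)

lemma B_top:
  fixes es :: "edge list" and U :: "grp set" and h :: "complex \<Rightarrow> grp pt"
  assumes fin: "finite U" and UG: "U \<subseteq> Gset"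
    and hm: "homeomorphic_map (top_of_set (cball (0::complex) 1)) (subtopology K_top (real_faces U)) h"
    and hs: "h ` sphere 0 1 = (\<Union>e \<in> set es. real_edge e)"
    and g: "g \<in> U" and i: "i < 5"
    and unsh: "\<And>g'. g' \<in> U \<Longrightarrow> g' \<noteq> g \<Longrightarrow> face_edge g i \<notin> face_edges g'"
  shows "face_edge g i \<in> set es"
proof (rule ccontr)
  assume nes: "face_edge g i \<notin> set es"
  obtain d where d: "d > 0" "\<And>p. dist (mid i) p < d \<Longrightarrow> p \<notin> pc ` {..<5}"
    "\<And>p j t. dist (mid i) p < d \<Longrightarrow> j < 5 \<Longrightarrow> 0 < t \<Longrightarrow> t < 1 \<Longrightarrow> p = comb j t \<Longrightarrow> j = i"
    using near_mid[OF i] by blast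
  define R where "R = real_faces U"
  define Y where "Y = subtopology K_top R"
  define No where "No = Pent \<inter> ball (mid i) (d/2)"
  define Nc where "Nc = Pent \<inter> cball (mid i) (d/2)"
  define psi where "psi = (\<lambda>p. canon g p)"
  have gG: "g \<in> Gset" using g UG by auto
  have NoNc: "No \<subseteq> Nc" unfolding No_def Nc_def by auto
  have key: "g'' = g \<and> p'' = p" if "p \<in> Nc" "g'' \<in> U" "canon g'' p'' = canon g p" for p g'' p''
  proof -
    have dd: "dist (mid i) p < d" using that(1) d(1) unfolding Nc_def by auto
    have uu: "\<forall>g'\<in>U. g' \<noteq> g \<longrightarrow> face_edge g i \<notin> face_edges g'" using unsh by blast
    show ?thesis by (rule key_local[where d=d and p=p and g''=g'' and p''=p'', OF UG g i uu d(2) d(3) dd that(2) that(3)])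
  qed
  have RX: "R \<subseteq> topspace K_top"
    unfolding R_def real_faces_QQ topspace_K topspace_XX using UG by auto
  have topY: "topspace Y = R" unfolding Y_def using RX by auto
  have hmY: "homeomorphic_map (top_of_set (cball (0::complex) 1)) Y h" using hm unfolding Y_def R_def .
  have hausY: "Hausdorff_space Y"
  proof -
    have "top_of_set (cball (0::complex) 1) homeomorphic_space Y"
      using hmY homeomorphic_map_maps homeomorphic_space_def by blast
    moreover have "Hausdorff_space (top_of_set (cball (0::complex) 1))"
      by (simp add: Hausdorff_space_subtopology)
    ultimately show ?thesis using homeomorphic_Hausdorff_space by blast
  qed
  have psiR: "psi ` Nc \<subseteq> R"
    unfolding psi_def R_def real_faces_def Nc_def using g by auto
  have openO: "openin Y (psi ` No)"
  proof -
    define A where "A = U \<times> Pent"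
    have AX: "A \<subseteq> topspace XX" unfolding A_def topspace_XX using UG by auto
    have c1: "compactin (discrete_topology Gset) U" using fin UG by (intro finite_imp_compactin) auto
    have c2: "compactin (top_of_set Pent) Pent" using compact_Pent by (simp add: compactin_subtopology)
    have compA: "compactin XX A"
      unfolding A_def XX_def compactin_Times using c1 c2 by auto
    define P where "P = {x \<in> A. QQ x \<in> psi ` No}"
    have PE: "P = {g} \<times> No"
    proof
      show "P \<subseteq> {g} \<times> No"
      proof
        fix x assume "x \<in> P"
        then obtain g'' p'' p where x: "x = (g'', p'')" "g'' \<in> U" "p \<in> No" "canon g'' p'' = canon g p"
          unfolding P_def A_def QQ_def psi_def by auto
        then show "x \<in> {g} \<times> No" using key[of p g'' p''] NoNc by auto
      qed
    next
      show "{g} \<times> No \<subseteq> P" unfolding P_def A_def QQ_def psi_def No_def using g by auto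
    qed
    have openP: "openin XX P"
      unfolding PE XX_def openin_prod_Times_iff No_def using gG by auto
    have clo: "closedin XX (topspace XX - P)" using openP by auto
    have FE: "A - P = (topspace XX - P) \<inter> A" using AX by auto
    have compF: "compactin XX (A - P)" unfolding FE by (rule closed_Int_compactin[OF clo compA])
    have compQF: "compactin K_top (QQ ` (A - P))" by (rule image_compactin[OF compF QQ_cont])
    have QFR: "QQ ` (A - P) \<subseteq> R" unfolding R_def real_faces_QQ A_def by auto
    have "compactin Y (QQ ` (A - P))" unfolding Y_def compactin_subtopology using compQF QFR by auto
    then have cloQF: "closedin Y (QQ ` (A - P))" by (rule compactin_imp_closedin[OF hausY])
    have eq: "psi ` No = topspace Y - QQ ` (A - P)"
    proof
      show "psi ` No \<subseteq> topspace Y - QQ ` (A - P)"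
      proof
        fix y assume y: "y \<in> psi ` No"
        then have "y \<in> R" using psiR NoNc by auto
        moreover have "y \<notin> QQ ` (A - P)"
        proof
          assume "y \<in> QQ ` (A - P)"
          then obtain x where "x \<in> A" "x \<notin> P" "y = QQ x" by auto
          then show False using y unfolding P_def by auto
        qed
        ultimately show "y \<in> topspace Y - QQ ` (A - P)" using topY by auto
      qed
    next
      show "topspace Y - QQ ` (A - P) \<subseteq> psi ` No"
      proof
        fix y assume y: "y \<in> topspace Y - QQ ` (A - P)"
        then have "y \<in> QQ ` A" using topY unfolding R_def real_faces_QQ A_def by auto
        then obtain x where x: "x \<in> A" "y = QQ x" by auto
        then have "x \<in> P" using y by auto
        then show "y \<in> psi ` No" using x unfolding P_def by auto
      qed
    qed
    show ?thesis unfolding eq using cloQF by auto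
  qed
  define Y' where "Y' = subtopology Y (psi ` Nc)"
  have contpsi: "continuous_map (top_of_set Nc) Y psi"
  proof -
    have "continuous_map (top_of_set Nc) XX (\<lambda>p. (g, p))"
      unfolding XX_def
    proof (rule continuous_map_pairedI)
      show "continuous_map (top_of_set Nc) (discrete_topology Gset) (\<lambda>x. g)" using gG by simp
      show "continuous_map (top_of_set Nc) (top_of_set Pent) (\<lambda>x. x)"
        unfolding continuous_map_in_subtopology Nc_def by (auto intro: continuous_map_from_subtopology)
    qed
    then have "continuous_map (top_of_set Nc) K_top (QQ \<circ> (\<lambda>p. (g, p)))"
      using QQ_cont continuous_map_compose by blast
    moreover have "QQ \<circ> (\<lambda>p. (g, p)) = psi" unfolding QQ_def psi_def by auto
    ultimately show ?thesis unfolding Y_def continuous_map_in_subtopology using psiR by auto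
  qed
  have topY': "topspace Y' = psi ` Nc" unfolding Y'_def using topY psiR by auto
  have hmpsi: "homeomorphic_map (top_of_set Nc) Y' psi"
  proof (rule continuous_imp_homeomorphic_map)
    show "continuous_map (top_of_set Nc) Y' psi"
      unfolding Y'_def continuous_map_in_subtopology using contpsi by auto
    have "compact Nc" unfolding Nc_def using compact_Pent by (simp add: compact_Int_closed)
    then show "compact_space (top_of_set Nc)"
      by (simp add: compact_space_subtopology)
    show "Hausdorff_space Y'" unfolding Y'_def by (rule Hausdorff_space_subtopology[OF hausY])
    show "psi ` topspace (top_of_set Nc) = topspace Y'" using topY' by simp
    show "inj_on psi (topspace (top_of_set Nc))"
      by (rule inj_onI) (use key g in \<open>auto simp: psi_def\<close>)
  qed
  then obtain kap where kap: "homeomorphic_maps (top_of_set Nc) Y' psi kap"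
    using homeomorphic_map_maps by blast
  have kapc: "continuous_map Y' (top_of_set Nc) kap"
    and kap1: "\<And>x. x \<in> Nc \<Longrightarrow> kap (psi x) = x"
    and kap2: "\<And>y. y \<in> psi ` Nc \<Longrightarrow> psi (kap y) = y"
    using kap topY' unfolding homeomorphic_maps_def by auto
  have midNo: "mid i \<in> No" unfolding No_def using mid_in_Pent d(1) by simp
  have dm: "dist (mid i) (mid i) < d" using d(1) by simp
  have nvm: "mid i \<noteq> pc k" if "k < 5" for k using d(2)[OF dm] that by blast
  have uqm: "j = i" if "j < 5" "0 < t'" "t' < 1" "mid i = comb j t'" for j t'
    by (rule d(3)[OF dm that])
  have x0: "psi (mid i) = EdgePt (face_edge g i) (prm i (1/2))"
    unfolding psi_def by (rule canon_edge[OF i _ _ _ nvm uqm]) (simp_all add: mid_def)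
  have x0R: "psi (mid i) \<in> topspace Y" using psiR midNo NoNc topY by auto
  have hsurj: "h ` cball 0 1 = topspace Y" using homeomorphic_imp_surjective_map[OF hmY] by simp
  have hinj: "inj_on h (cball 0 1)" using homeomorphic_imp_injective_map[OF hmY] by simp
  have "psi (mid i) \<in> h ` cball 0 1" using x0R hsurj by simp
  then obtain z where z0: "z \<in> cball 0 1" "psi (mid i) = h z" by (rule imageE)
  then have z: "z \<in> cball 0 1" "h z = psi (mid i)" by auto
  have zs: "z \<notin> sphere 0 1"
  proof
    assume "z \<in> sphere 0 1"
    then have "h z \<in> h ` sphere 0 1" by (rule imageI)
    then have "psi (mid i) \<in> (\<Union>e \<in> set es. real_edge e)" by (simp only: hs z(2))
    then obtain e where e1: "e \<in> set es" and e2: "EdgePt (face_edge g i) (prm i (1/2)) \<in> real_edge e"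
      unfolding x0 by (rule UN_E)
    from e2 have "face_edge g i = e" unfolding real_edge_def by auto
    then show False using e1 nes by simp
  qed
  have zb: "z \<in> ball 0 1" using z zs by (simp add: dist_norm le_less)
  have "openin (top_of_set (cball (0::complex) 1)) {w \<in> topspace (top_of_set (cball (0::complex) 1)). h w \<in> psi ` No}"
    by (rule openin_continuous_map_preimage[OF homeomorphic_imp_continuous_map[OF hmY] openO])
  then obtain T where T: "open T" "{w \<in> cball 0 1. h w \<in> psi ` No} = cball 0 1 \<inter> T"
    unfolding openin_open by auto
  define W where "W = ball 0 1 \<inter> T"
  have oW: "open W" unfolding W_def using T by auto
  have Wc: "W \<subseteq> cball 0 1" unfolding W_def by auto
  have hW: "h w \<in> psi ` No" if "w \<in> W" for w
  proof -
    have "w \<in> cball 0 1 \<inter> T" using that Wc unfolding W_def by auto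
    then have "w \<in> {w \<in> cball 0 1. h w \<in> psi ` No}" using T(2) by simp
    then show ?thesis by simp
  qed
  have zW: "z \<in> W"
  proof -
    have "h z \<in> psi ` No" using z(2) midNo by simp
    then have "z \<in> {w \<in> cball 0 1. h w \<in> psi ` No}" using z(1) by simp
    then have "z \<in> T" using T(2) by blast
    then show ?thesis using zb unfolding W_def by simp
  qed
  define k where "k = kap \<circ> h"
  have contk: "continuous_on W k"
  proof -
    have "continuous_map (subtopology (top_of_set (cball (0::complex) 1)) W) Y h"
      by (rule continuous_map_from_subtopology[OF homeomorphic_imp_continuous_map[OF hmY]])
    moreover have "subtopology (top_of_set (cball (0::complex) 1)) W = top_of_set W"
      using Wc by (simp add: subtopology_subtopology Int_absorb1)
    ultimately have "continuous_map (top_of_set W) Y h" by simp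
    then have "continuous_map (top_of_set W) Y' h"
      unfolding Y'_def continuous_map_in_subtopology using hW NoNc by auto
    then have "continuous_map (top_of_set W) (top_of_set Nc) k"
      unfolding k_def using kapc continuous_map_compose by blast
    then have "continuous_map (top_of_set W) euclidean k"
      unfolding continuous_map_in_subtopology by simp
    then show ?thesis by simp
  qed
  have kNc: "k w \<in> Nc" if "w \<in> W" for w
  proof -
    have "h w \<in> topspace Y'" using hW[OF that] NoNc topY' by auto
    then have "kap (h w) \<in> topspace (top_of_set Nc)"
      using continuous_map_image_subset_topspace[OF kapc] by blast
    then show ?thesis unfolding k_def by simp
  qed
  have injk: "inj_on k W"
  proof (rule inj_onI)
    fix w1 w2 assume w: "w1 \<in> W" "w2 \<in> W" "k w1 = k w2"
    have "h w1 = psi (k w1)" using kap2 hW[OF w(1)] NoNc unfolding k_def by auto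
    also have "\<dots> = psi (k w2)" using w by simp
    also have "\<dots> = h w2" using kap2 hW[OF w(2)] NoNc unfolding k_def by auto
    finally show "w1 = w2" using hinj w Wc by (auto dest: inj_onD)
  qed
  have oK: "open (k ` W)" by (rule invariance_of_domain[OF contk oW injk])
  have "k z = mid i" unfolding k_def using z kap1 midNo NoNc by auto
  then have mK: "mid i \<in> k ` W" using zW by (metis imageI)
  have "\<exists>e>0. ball (mid i) e \<subseteq> k ` W" using open_contains_ball_eq[OF oK] mK by simp
  then obtain e where e: "e > 0" "ball (mid i) e \<subseteq> k ` W" by blast
  have "k ` W \<subseteq> Pent" using kNc unfolding Nc_def by auto
  then show False using mid_not_interior[OF i e(1)] e(2) by auto
qed

theorem lemma3p2:
  fixes vs :: "grp list" and es :: "edge list" and U :: "grp set"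
  assumes "embedded_edge_cycle vs es"
    and "finite U" and "U \<noteq> {}" and "U \<subseteq> Gset"
    and "\<exists>h. homeomorphic_map (top_of_set (cball (0::complex) 1))
               (subtopology K_top (real_faces U)) h
             \<and> h ` sphere 0 1 = (\<Union>e \<in> set es. real_edge e)"
  shows "card U = 1 \<or>
         (\<exists>g1 \<in> U. \<exists>g2 \<in> U. g1 \<noteq> g2 \<and>
            card (face_edges g1 \<inter> set es) = 4 \<and> card (face_edges g2 \<inter> set es) = 4)"
proof (cases "card U = 1")
  case True then show ?thesis by simp
next
  case False
  note cyc = assms(1) and fin = assms(2) and UG = assms(4)
  obtain h where hm: "homeomorphic_map (top_of_set (cball (0::complex) 1)) (subtopology K_top (real_faces U)) h"
    and hs: "h ` sphere 0 1 = (\<Union>e \<in> set es. real_edge e)" using assms(5) by blast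
  have "card U \<noteq> 0" using fin assms(3) by simp
  then have two: "card U \<ge> 2" using False by linarith
  have B: "face_edge g i \<in> set es" if g: "g \<in> U" and i: "i < 5" and np: "\<not> (i < 4 \<and> pt i g \<in> U)" for g i
  proof (rule B_top[OF fin UG hm hs g i])
    fix g' assume g': "g' \<in> U" "g' \<noteq> g"
    show "face_edge g i \<notin> face_edges g'"
    proof
      assume "face_edge g i \<in> face_edges g'"
      then obtain j where j: "j < 5" "face_edge g i = face_edge g' j" unfolding face_edges_def by auto
      have "(j = i \<and> g' = g) \<or> (i < 4 \<and> j = pr i \<and> g' = pt i g)"
        by (rule edge_lemma) (use g g' UG i j in auto)
      then show False using g' np by auto
    qed
  qed
  have le4: "card (face_edges g \<inter> set es) \<le> 4" if g: "g \<in> U" for g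
  proof -
    obtain g' where g': "g' \<in> U" "g' \<noteq> g"
    proof -
      have "\<not> U \<subseteq> {g}"
      proof
        assume "U \<subseteq> {g}"
        then have "card U \<le> card {g}" by (intro card_mono) auto
        then show False using two by simp
      qed
      then show ?thesis using that by blast
    qed
    have "face_edge g' 4 \<in> set es" using B[OF g'(1)] by simp
    then show ?thesis using le4_lemma[OF cyc _ _ g'(2)] g g'(1) UG by blast
  qed
  have "\<exists>g1\<in>U. \<exists>g2\<in>U. g1 \<noteq> g2 \<and> card (face_edges g1 \<inter> set es) = 4 \<and> card (face_edges g2 \<inter> set es) = 4"
    by (rule count_main[OF fin UG two B le4]) auto
  then show ?thesis by blast
qed

end
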